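(* Let $\mathcal{B}$ and $\mathcal{C}$ be algebras in a functional language $\mathcal{L}$. If $\mathrm{Th}_{\exists}(\mathcal{B})\supseteq\mathrm{Th}_{\exists}(\mathcal{C})$, then $\mathcal{C}$ is isomorphic to some limit algebra over $\mathcal{B}$.
   Context: Functional language: operation symbols $F$ (arity $n_F$) and constants only. $\mathrm{Th}_\exists(\mathcal{M})$ is the set of existential $\mathcal{L}$-sentences true in $\mathcal{M}$. A diagram-formula in a finite reduct $\mathcal{L}'$ of $\mathcal{L}$ in finite variables $X$ is a conjunction of atomic formulas and negations such that $\neg(x=y)$ is a conjunct for distinct $x,y\in X$, for each $F\in\mathcal{L}'$ and $(x_0,\dots,x_{n_F})\in X^{n_F+1}$ exactly one of $F(x_1,\dots,x_{n_F})=x_0$ and its negation is a conjunct, and for each constant $c\in\mathcal{L}'$ and $x\in X$ exactly one of $x=c$, $\neg(x=c)$ is a conjunct. A direct system of formulas $\Lambda=(I,\varphi_i,\gamma_{ij})$: $(I,\le)$ directed; $\varphi_i$ consistent diagram-formulas in finite reducts $\mathcal{L}_i$ and finite variables $X_i$; maps $\gamma_{ij}:X_i\to X_j$ ($i\le j$) with $\gamma_{ii}=\mathrm{id}$, $\gamma_{jk}\gamma_{ij}=\gamma_{ik}$, conjuncts of $\varphi_i(\gamma_{ij}(X_i))$ are conjuncts of $\varphi_j$; every constant appears in a conjunct $x=c$ of some $\varphi_i$; for every $F,i,(x_1,\dots,x_{n_F})\in X_i^{n_F}$ some $j\ge i$ has a conjunct $F(\gamma_{ij}(x_1),\dots,\gamma_{ij}(x_{n_F}))=x_j$.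 The limit algebra $L(\Lambda)$ has universe $\{(x,i):x\in X_i\}/\!\equiv$, $(x,i)\equiv(y,j)$ iff $\gamma_{ik}(x)=\gamma_{jk}(y)$ for some $k\ge i,j$, with constants and operations read off from the conjuncts $x=c$ and $F(\dots)=x_j$ (well defined). It is a limit algebra over $\mathcal{B}$ if each $\varphi_i$ is true in $\mathcal{B}$ under some assignment $X_i\to B$. *)

theory Defs
  imports Main
begin

text \<open>A functional language is given by a set Fs of operation symbols with arity
  function ar, and a set Cs of constant symbols.\<close>

record ('f, 'c, 'a) alg =
  alg_univ :: "'a set"
  alg_op   :: "'f \<Rightarrow> 'a list \<Rightarrow> 'a"
  alg_cst  :: "'c \<Rightarrow> 'a"

definition is_alg :: "'f set \<Rightarrow> ('f \<Rightarrow> nat) \<Rightarrow> 'c set \<Rightarrow> ('f, 'c, 'a, 'z) alg_scheme \<Rightarrow> bool" where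
  "is_alg Fs ar Cs A \<longleftrightarrow>
     alg_univ A \<noteq> {} \<and>
     (\<forall>F\<in>Fs. \<forall>xs. set xs \<subseteq> alg_univ A \<and> length xs = ar F \<longrightarrow> alg_op A F xs \<in> alg_univ A) \<and>
     (\<forall>c\<in>Cs. alg_cst A c \<in> alg_univ A)"

datatype ('f, 'c, 'v) trm = Var 'v | Cst 'c | App 'f "('f, 'c, 'v) trm list"

datatype ('f, 'c, 'v) qf =
    Eq "('f, 'c, 'v) trm" "('f, 'c, 'v) trm"
  | Neg "('f, 'c, 'v) qf"
  | Conj "('f, 'c, 'v) qf" "('f, 'c, 'v) qf"
  | Disj "('f, 'c, 'v) qf" "('f, 'c, 'v) qf"

fun evt :: "('f, 'c, 'a, 'z) alg_scheme \<Rightarrow> ('v \<Rightarrow> 'a) \<Rightarrow> ('f, 'c, 'v) trm \<Rightarrow> 'a" where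
  "evt M a (Var v) = a v"
| "evt M a (Cst c) = alg_cst M c"
| "evt M a (App F ts) = alg_op M F (map (evt M a) ts)"

fun sat :: "('f, 'c, 'a, 'z) alg_scheme \<Rightarrow> ('v \<Rightarrow> 'a) \<Rightarrow> ('f, 'c, 'v) qf \<Rightarrow> bool" where
  "sat M a (Eq s t) = (evt M a s = evt M a t)"
| "sat M a (Neg p) = (\<not> sat M a p)"
| "sat M a (Conj p q) = (sat M a p \<and> sat M a q)"
| "sat M a (Disj p q) = (sat M a p \<or> sat M a q)"

fun wf_trm :: "'f set \<Rightarrow> ('f \<Rightarrow> nat) \<Rightarrow> 'c set \<Rightarrow> nat \<Rightarrow> ('f, 'c, nat) trm \<Rightarrow> bool" where
  "wf_trm Fs ar Cs n (Var v) = (v < n)"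
| "wf_trm Fs ar Cs n (Cst c) = (c \<in> Cs)"
| "wf_trm Fs ar Cs n (App F ts) = (F \<in> Fs \<and> length ts = ar F \<and> (\<forall>t\<in>set ts. wf_trm Fs ar Cs n t))"

fun wf_qf :: "'f set \<Rightarrow> ('f \<Rightarrow> nat) \<Rightarrow> 'c set \<Rightarrow> nat \<Rightarrow> ('f, 'c, nat) qf \<Rightarrow> bool" where
  "wf_qf Fs ar Cs n (Eq s t) = (wf_trm Fs ar Cs n s \<and> wf_trm Fs ar Cs n t)"
| "wf_qf Fs ar Cs n (Neg p) = wf_qf Fs ar Cs n p"
| "wf_qf Fs ar Cs n (Conj p q) = (wf_qf Fs ar Cs n p \<and> wf_qf Fs ar Cs n q)"
| "wf_qf Fs ar Cs n (Disj p q) = (wf_qf Fs ar Cs n p \<and> wf_qf Fs ar Cs n q)"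

text \<open>An existential sentence is represented as a pair (n, phi): the sentence
  Ex x_0 ... x_(n-1). phi with phi quantifier-free in the variables 0..<n.\<close>
definition Th_ex :: "'f set \<Rightarrow> ('f \<Rightarrow> nat) \<Rightarrow> 'c set \<Rightarrow> ('f, 'c, 'a, 'z) alg_scheme
    \<Rightarrow> (nat \<times> ('f, 'c, nat) qf) set" where
  "Th_ex Fs ar Cs A = {(n, \<phi>). wf_qf Fs ar Cs n \<phi> \<and>
       (\<exists>v. (\<forall>i<n. v i \<in> alg_univ A) \<and> sat A v \<phi>)}"

text \<open>A diagram-formula (conjunction) is represented by its set of conjuncts S.\<close>
definition diagram_formula :: "'f set \<Rightarrow> ('f \<Rightarrow> nat) \<Rightarrow> 'c set \<Rightarrow> 'f set \<Rightarrow> 'c set \<Rightarrow> 'v set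
    \<Rightarrow> ('f, 'c, 'v) qf set \<Rightarrow> bool" where
  "diagram_formula Fs ar Cs LF LC X S \<longleftrightarrow>
     finite LF \<and> LF \<subseteq> Fs \<and> finite LC \<and> LC \<subseteq> Cs \<and> finite X \<and>
     (\<forall>\<phi>\<in>S.
        (\<exists>x y. x \<in> X \<and> y \<in> X \<and> x \<noteq> y \<and> \<phi> = Neg (Eq (Var x) (Var y))) \<or>
        (\<exists>F xs x0. F \<in> LF \<and> set xs \<subseteq> X \<and> length xs = ar F \<and> x0 \<in> X \<and>
            (\<phi> = Eq (App F (map Var xs)) (Var x0) \<or> \<phi> = Neg (Eq (App F (map Var xs)) (Var x0)))) \<or>
        (\<exists>x c. x \<in> X \<and> c \<in> LC \<and> (\<phi> = Eq (Var x) (Cst c) \<or> \<phi> = Neg (Eq (Var x) (Cst c))))) \<and>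
     (\<forall>x\<in>X. \<forall>y\<in>X. x \<noteq> y \<longrightarrow> Neg (Eq (Var x) (Var y)) \<in> S) \<and>
     (\<forall>F\<in>LF. \<forall>xs x0. set xs \<subseteq> X \<and> length xs = ar F \<and> x0 \<in> X \<longrightarrow>
        ((Eq (App F (map Var xs)) (Var x0) \<in> S) \<noteq> (Neg (Eq (App F (map Var xs)) (Var x0)) \<in> S))) \<and>
     (\<forall>c\<in>LC. \<forall>x\<in>X. (Eq (Var x) (Cst c) \<in> S) \<noteq> (Neg (Eq (Var x) (Cst c)) \<in> S))"

definition consistent_fm :: "'f set \<Rightarrow> ('f \<Rightarrow> nat) \<Rightarrow> 'c set \<Rightarrow> 'v set \<Rightarrow> ('f, 'c, 'v) qf set \<Rightarrow> bool" where
  "consistent_fm Fs ar Cs X S \<longleftrightarrow>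
     (\<exists>M :: ('f, 'c, 'v option) alg. is_alg Fs ar Cs M \<and>
        (\<exists>a. a ` X \<subseteq> alg_univ M \<and> (\<forall>\<phi>\<in>S. sat M a \<phi>)))"

record ('i, 'f, 'c, 'v) dsys =
  dI   :: "'i set"
  dle  :: "'i \<Rightarrow> 'i \<Rightarrow> bool"
  dLF  :: "'i \<Rightarrow> 'f set"
  dLC  :: "'i \<Rightarrow> 'c set"
  dX   :: "'i \<Rightarrow> 'v set"
  dphi :: "'i \<Rightarrow> ('f, 'c, 'v) qf set"
  dgam :: "'i \<Rightarrow> 'i \<Rightarrow> 'v \<Rightarrow> 'v"

definition direct_system :: "'f set \<Rightarrow> ('f \<Rightarrow> nat) \<Rightarrow> 'c set \<Rightarrow> ('i, 'f, 'c, 'v) dsys \<Rightarrow> bool" where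
  "direct_system Fs ar Cs D \<longleftrightarrow>
     \<comment> \<open>(I, le) is a directed (preordered) set\<close>
     dI D \<noteq> {} \<and>
     (\<forall>i\<in>dI D. dle D i i) \<and>
     (\<forall>i\<in>dI D. \<forall>j\<in>dI D. \<forall>k\<in>dI D. dle D i j \<and> dle D j k \<longrightarrow> dle D i k) \<and>
     (\<forall>i\<in>dI D. \<forall>j\<in>dI D. \<exists>k\<in>dI D. dle D i k \<and> dle D j k) \<and>
     \<comment> \<open>consistent diagram-formulas\<close>
     (\<forall>i\<in>dI D. diagram_formula Fs ar Cs (dLF D i) (dLC D i) (dX D i) (dphi D i) \<and>
                consistent_fm Fs ar Cs (dX D i) (dphi D i)) \<and>
     \<comment> \<open>the maps gamma\<close>
     (\<forall>i\<in>dI D. \<forall>j\<in>dI D. dle D i j \<longrightarrow> dgam D i j ` dX D i \<subseteq> dX D j) \<and>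
     (\<forall>i\<in>dI D. \<forall>x\<in>dX D i. dgam D i i x = x) \<and>
     (\<forall>i\<in>dI D. \<forall>j\<in>dI D. \<forall>k\<in>dI D. dle D i j \<and> dle D j k \<longrightarrow>
        (\<forall>x\<in>dX D i. dgam D j k (dgam D i j x) = dgam D i k x)) \<and>
     (\<forall>i\<in>dI D. \<forall>j\<in>dI D. dle D i j \<longrightarrow>
        (\<forall>\<phi>\<in>dphi D i. map_qf id id (dgam D i j) \<phi> \<in> dphi D j)) \<and>
     \<comment> \<open>every constant is named\<close>
     (\<forall>c\<in>Cs. \<exists>i\<in>dI D. \<exists>x. Eq (Var x) (Cst c) \<in> dphi D i) \<and>
     \<comment> \<open>every operation is eventually defined\<close>
     (\<forall>F\<in>Fs. \<forall>i\<in>dI D. \<forall>xs. set xs \<subseteq> dX D i \<and> length xs = ar F \<longrightarrow>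
        (\<exists>j\<in>dI D. dle D i j \<and>
           (\<exists>x. Eq (App F (map (\<lambda>y. Var (dgam D i j y)) xs)) (Var x) \<in> dphi D j)))"

definition ldom :: "('i, 'f, 'c, 'v) dsys \<Rightarrow> ('v \<times> 'i) set" where
  "ldom D = {(x, i). i \<in> dI D \<and> x \<in> dX D i}"

definition lrel :: "('i, 'f, 'c, 'v) dsys \<Rightarrow> (('v \<times> 'i) \<times> ('v \<times> 'i)) set" where
  "lrel D = {(p, q). p \<in> ldom D \<and> q \<in> ldom D \<and>
     (\<exists>k\<in>dI D. dle D (snd p) k \<and> dle D (snd q) k \<and>
        dgam D (snd p) k (fst p) = dgam D (snd q) k (fst q))}"

definition limit_alg :: "('f \<Rightarrow> nat) \<Rightarrow> ('i, 'f, 'c, 'v) dsys \<Rightarrow> ('f, 'c, ('v \<times> 'i) set) alg" where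
  "limit_alg ar D =
     \<lparr> alg_univ = ldom D // lrel D,
       alg_op = (\<lambda>F As. lrel D `` {SOME q. \<exists>i xs. i \<in> dI D \<and> snd q \<in> dI D \<and> dle D i (snd q) \<and>
                     set xs \<subseteq> dX D i \<and> length xs = ar F \<and>
                     map (\<lambda>y. lrel D `` {(y, i)}) xs = As \<and>
                     Eq (App F (map (\<lambda>y. Var (dgam D i (snd q) y)) xs)) (Var (fst q)) \<in> dphi D (snd q)}),
       alg_cst = (\<lambda>c. lrel D `` {SOME p. p \<in> ldom D \<and> Eq (Var (fst p)) (Cst c) \<in> dphi D (snd p)}) \<rparr>"

definition limit_over :: "'f set \<Rightarrow> ('f \<Rightarrow> nat) \<Rightarrow> 'c set \<Rightarrow> ('f, 'c, 'b, 'z) alg_scheme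
    \<Rightarrow> ('i, 'f, 'c, 'v) dsys \<Rightarrow> bool" where
  "limit_over Fs ar Cs B D \<longleftrightarrow> direct_system Fs ar Cs D \<and>
     (\<forall>i\<in>dI D. \<exists>a. a ` dX D i \<subseteq> alg_univ B \<and> (\<forall>\<phi>\<in>dphi D i. sat B a \<phi>))"

definition alg_iso :: "'f set \<Rightarrow> ('f \<Rightarrow> nat) \<Rightarrow> 'c set \<Rightarrow> ('f, 'c, 'a, 'z) alg_scheme
    \<Rightarrow> ('f, 'c, 'b, 'y) alg_scheme \<Rightarrow> ('a \<Rightarrow> 'b) \<Rightarrow> bool" where
  "alg_iso Fs ar Cs A B h \<longleftrightarrow> bij_betw h (alg_univ A) (alg_univ B) \<and>
     (\<forall>F\<in>Fs. \<forall>xs. set xs \<subseteq> alg_univ A \<and> length xs = ar F \<longrightarrow>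
        h (alg_op A F xs) = alg_op B F (map h xs)) \<and>
     (\<forall>c\<in>Cs. h (alg_cst A c) = alg_cst B c)"

end

theory Submission imports Defs begin

definition lits :: "('f \<Rightarrow> nat) \<Rightarrow> 'f set \<Rightarrow> 'c set \<Rightarrow> 'v set \<Rightarrow> ('f,'c,'v) qf set" where
  "lits ar LF LC X =
     (\<lambda>(x,y). Neg (Eq (Var x) (Var y))) ` {(x,y). x\<in>X \<and> y\<in>X \<and> x\<noteq>y} \<union>
     (\<Union>F\<in>LF. \<Union>xs\<in>{xs. set xs \<subseteq> X \<and> length xs = ar F}. \<Union>x0\<in>X.
        {Eq (App F (map Var xs)) (Var x0), Neg (Eq (App F (map Var xs)) (Var x0))}) \<union>
     (\<Union>x\<in>X. \<Union>c\<in>LC. {Eq (Var x) (Cst c), Neg (Eq (Var x) (Cst c))})"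

lemma lits_finite: "finite LF \<Longrightarrow> finite LC \<Longrightarrow> finite X \<Longrightarrow> finite (lits ar LF LC X)"
  unfolding lits_def
  apply (intro finite_UnI finite_imageI finite_UN_I)
  using finite_lists_length_eq[of X] by (auto intro: finite_subset[of _ "X \<times> X"])

lemma lits_mono: "LF \<subseteq> LF' \<Longrightarrow> LC \<subseteq> LC' \<Longrightarrow> X \<subseteq> X' \<Longrightarrow> lits ar LF LC X \<subseteq> lits ar LF' LC' X'"
  unfolding lits_def by fastforce

definition diag :: "('f \<Rightarrow> nat) \<Rightarrow> ('f,'c,'a) alg \<Rightarrow> 'f set \<Rightarrow> 'c set \<Rightarrow> 'a set \<Rightarrow> ('f,'c,'a) qf set" where
  "diag ar C LF LC X = {\<phi> \<in> lits ar LF LC X. sat C id \<phi>}"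

lemma diag_df: "finite LF \<Longrightarrow> LF \<subseteq> Fs \<Longrightarrow> finite LC \<Longrightarrow> LC \<subseteq> Cs \<Longrightarrow> finite X \<Longrightarrow>
   diagram_formula Fs ar Cs LF LC X (diag ar C LF LC X)"
  unfolding diagram_formula_def diag_def
  apply (intro conjI)
  apply (simp_all)
  apply (auto simp: lits_def)
  done

lemma evt_cong: "(\<forall>x\<in>set3_trm t. a x = b x) \<Longrightarrow> evt M a t = evt M b t"
  by (induction t) (auto intro!: arg_cong[where f="alg_op M _"] map_cong)

lemma sat_cong: "(\<forall>x\<in>set3_qf p. a x = b x) \<Longrightarrow> sat M a p = sat M b p"
proof (induction p)
  case (Eq s t) then show ?case using evt_cong[of s a b M] evt_cong[of t a b M] by auto
qed auto

lemma evt_map: "evt M v (map_trm id id g t) = evt M (v \<circ> g) t"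
  by (induction t) (auto intro!: arg_cong[where f="alg_op M _"] map_cong)

lemma sat_map: "sat M v (map_qf id id g p) = sat M (v \<circ> g) p"
  using evt_map[of M v g] by (induction p) (auto simp: id_def comp_def)

lemma lits_vars: "p \<in> lits ar LF LC X \<Longrightarrow> set3_qf p \<subseteq> X"
  unfolding lits_def by auto

definition Idx :: "'f set \<Rightarrow> 'c set \<Rightarrow> ('f,'c,'a) alg \<Rightarrow> ('f set \<times> 'c set \<times> 'a set) set" where
  "Idx Fs Cs C = {(LF,LC,X). finite LF \<and> LF \<subseteq> Fs \<and> finite LC \<and> LC \<subseteq> Cs \<and> finite X \<and> X \<subseteq> alg_univ C}"

definition ile :: "('f set \<times> 'c set \<times> 'a set) \<Rightarrow> ('f set \<times> 'c set \<times> 'a set) \<Rightarrow> bool" where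
  "ile i j \<longleftrightarrow> fst i \<subseteq> fst j \<and> fst (snd i) \<subseteq> fst (snd j) \<and> snd (snd i) \<subseteq> snd (snd j)"

definition Dsys :: "'f set \<Rightarrow> ('f \<Rightarrow> nat) \<Rightarrow> 'c set \<Rightarrow> ('f,'c,'a) alg \<Rightarrow> ('f set \<times> 'c set \<times> 'a set, 'f, 'c, 'a) dsys" where
  "Dsys Fs ar Cs C = \<lparr>dI = Idx Fs Cs C, dle = ile, dLF = fst, dLC = \<lambda>i. fst (snd i),
     dX = \<lambda>i. snd (snd i), dphi = \<lambda>i. diag ar C (fst i) (fst (snd i)) (snd (snd i)),
     dgam = \<lambda>i j x. x\<rparr>"

lemma Dsys_simps[simp]:
  "dI (Dsys Fs ar Cs C) = Idx Fs Cs C" "dle (Dsys Fs ar Cs C) = ile" "dLF (Dsys Fs ar Cs C) = fst"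
  "dLC (Dsys Fs ar Cs C) = (\<lambda>i. fst (snd i))" "dX (Dsys Fs ar Cs C) = (\<lambda>i. snd (snd i))"
  "dphi (Dsys Fs ar Cs C) = (\<lambda>i. diag ar C (fst i) (fst (snd i)) (snd (snd i)))"
  "dgam (Dsys Fs ar Cs C) = (\<lambda>i j x. x)"
  by (simp_all add: Dsys_def)

definition SomeAlg :: "('f,'c,'a) alg \<Rightarrow> ('f,'c,'a option) alg" where
  "SomeAlg C = \<lparr>alg_univ = Some ` alg_univ C, alg_op = \<lambda>F ys. Some (alg_op C F (map the ys)),
      alg_cst = \<lambda>c. Some (alg_cst C c)\<rparr>"

lemma evt_Some: "evt (SomeAlg C) Some t = Some (evt C id t)"
  by (induction t) (auto simp: SomeAlg_def comp_def intro!: arg_cong[where f="alg_op C _"] map_cong)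

lemma sat_Some: "sat (SomeAlg C) Some p = sat C id p"
  by (induction p) (auto simp: evt_Some id_def)

lemma is_alg_Some: "is_alg Fs ar Cs (SomeAlg C)" if "is_alg Fs ar Cs C"
proof -
  have u: "alg_univ C \<noteq> {}" and o: "\<And>F xs. F\<in>Fs \<Longrightarrow> set xs \<subseteq> alg_univ C \<Longrightarrow> length xs = ar F \<Longrightarrow> alg_op C F xs \<in> alg_univ C"
    and c: "\<And>c. c\<in>Cs \<Longrightarrow> alg_cst C c \<in> alg_univ C" using that unfolding is_alg_def by auto
  have m: "set xs \<subseteq> Some ` A \<Longrightarrow> set (map the xs) \<subseteq> A" for xs A by auto
  have o2: "Some (alg_op C F (map the xs)) \<in> Some ` alg_univ C" if "F\<in>Fs" "set xs \<subseteq> Some ` alg_univ C" "length xs = ar F" for F xs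
    using o[OF that(1) m[OF that(2)]] that(3) by simp
  show ?thesis unfolding is_alg_def SomeAlg_def using u o2 c by simp
qed

lemma consistent_diag: "is_alg Fs ar Cs C \<Longrightarrow> X \<subseteq> alg_univ C \<Longrightarrow> consistent_fm Fs ar Cs X (diag ar C LF LC X)"
  unfolding consistent_fm_def
  apply (rule exI[of _ "SomeAlg C"])
  apply (auto simp: is_alg_Some diag_def sat_Some intro!: exI[of _ Some])
  apply (auto simp: SomeAlg_def)
  done

lemma direct: assumes "is_alg Fs ar Cs C" shows "direct_system Fs ar Cs (Dsys Fs ar Cs C)"
proof -
  have cl: "alg_op C F xs \<in> alg_univ C" if "F \<in> Fs" "set xs \<subseteq> alg_univ C" "length xs = ar F" for F xs
    using assms that unfolding is_alg_def by auto
  have cc: "alg_cst C c \<in> alg_univ C" if "c \<in> Cs" for c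
    using assms that unfolding is_alg_def by auto
  show ?thesis
  unfolding direct_system_def Dsys_simps
  proof (intro conjI ballI allI impI)
    show "Idx Fs Cs C \<noteq> {}" unfolding Idx_def by auto
  next
    fix i j assume "i \<in> Idx Fs Cs C" "j \<in> Idx Fs Cs C"
    then show "\<exists>k\<in>Idx Fs Cs C. ile i k \<and> ile j k"
      by (intro bexI[of _ "(fst i \<union> fst j, fst (snd i) \<union> fst (snd j), snd (snd i) \<union> snd (snd j))"])
         (auto simp: Idx_def ile_def)
  next
    fix i assume "i \<in> Idx Fs Cs C"
    then show "diagram_formula Fs ar Cs (fst i) (fst (snd i)) (snd (snd i)) (diag ar C (fst i) (fst (snd i)) (snd (snd i)))"
      using diag_df by (auto simp: Idx_def)
  next
    fix i assume "i \<in> Idx Fs Cs C"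
    then show "consistent_fm Fs ar Cs (snd (snd i)) (diag ar C (fst i) (fst (snd i)) (snd (snd i)))"
      using consistent_diag[OF assms] by (auto simp: Idx_def)
  next
    fix i j \<phi> assume "i \<in> Idx Fs Cs C" "j \<in> Idx Fs Cs C" "ile i j" "\<phi> \<in> diag ar C (fst i) (fst (snd i)) (snd (snd i))"
    then show "map_qf id id (\<lambda>x. x) \<phi> \<in> diag ar C (fst j) (fst (snd j)) (snd (snd j))"
      using lits_mono[of "fst i" "fst j" "fst (snd i)" "fst (snd j)" "snd (snd i)" "snd (snd j)" ar]
      by (auto simp: diag_def ile_def id_def[symmetric] qf.map_id)
  next
    fix c assume "c \<in> Cs"
    then show "\<exists>i\<in>Idx Fs Cs C. \<exists>x. Eq (Var x) (Cst c) \<in> diag ar C (fst i) (fst (snd i)) (snd (snd i))"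
      by (intro bexI[of _ "({}, {c}, {alg_cst C c})"] exI[of _ "alg_cst C c"])
         (auto simp: Idx_def diag_def lits_def cc)
  next
    fix F i xs assume F: "F \<in> Fs" and i: "i \<in> Idx Fs Cs C" and xs: "set xs \<subseteq> snd (snd i) \<and> length xs = ar F"
    have "set xs \<subseteq> alg_univ C" using i xs unfolding Idx_def by fastforce
    then have "alg_op C F xs \<in> alg_univ C" using cl F xs by auto
    then show "\<exists>j\<in>Idx Fs Cs C. ile i j \<and> (\<exists>x. Eq (App F (map (\<lambda>y. Var y) xs)) (Var x) \<in> diag ar C (fst j) (fst (snd j)) (snd (snd j)))"
      using F i xs
      by (intro bexI[of _ "(insert F (fst i), fst (snd i), insert (alg_op C F xs) (snd (snd i)))"] conjI exI[of _ "alg_op C F xs"])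
         (auto simp: Idx_def diag_def lits_def ile_def comp_def)
  qed (auto simp: ile_def)
qed

lemma sat_foldr: "sat M v (foldr Conj qs b) = (sat M v b \<and> (\<forall>q\<in>set qs. sat M v q))"
  by (induction qs) auto

lemma wf_foldr: "wf_qf Fs ar Cs n (foldr Conj qs b) = (wf_qf Fs ar Cs n b \<and> (\<forall>q\<in>set qs. wf_qf Fs ar Cs n q))"
  by (induction qs) auto

lemma wf_lits: "p \<in> lits ar LF LC X \<Longrightarrow> LF \<subseteq> Fs \<Longrightarrow> LC \<subseteq> Cs \<Longrightarrow> (\<forall>x\<in>X. g x < n) \<Longrightarrow>
   wf_qf Fs ar Cs n (map_qf id id g p)"
  unfolding lits_def by (auto simp: subset_eq)

lemma over:
  assumes C: "is_alg Fs ar Cs C" and Th: "Th_ex Fs ar Cs C \<subseteq> Th_ex Fs ar Cs B"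
    and i: "(LF, LC, X) \<in> Idx Fs Cs C"
  shows "\<exists>a. a ` X \<subseteq> alg_univ B \<and> (\<forall>\<phi>\<in>diag ar C LF LC X. sat B a \<phi>)"
proof -
  have fin: "finite LF" "LF \<subseteq> Fs" "finite LC" "LC \<subseteq> Cs" "finite X" "X \<subseteq> alg_univ C"
    using i by (auto simp: Idx_def)
  have "finite (diag ar C LF LC X)" unfolding diag_def using lits_finite[OF fin(1,3,5)] by simp
  then obtain ps where ps: "set ps = diag ar C LF LC X" using finite_list by blast
  obtain xs where xs: "set xs = X" using finite_list fin(5) by blast
  define n where "n = length xs"
  define idx where "idx x = (SOME k. k < n \<and> xs ! k = x)" for x
  have idx: "idx x < n \<and> xs ! idx x = x" if "x \<in> X" for x
  proof -
    have "\<exists>k. k < n \<and> xs ! k = x" using that xs by (auto simp: n_def in_set_conv_nth)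
    then show ?thesis unfolding idx_def by (rule someI_ex)
  qed
  obtain c0 where c0: "c0 \<in> alg_univ C" using C unfolding is_alg_def by auto
  define v where "v k = (if k < n then xs ! k else c0)" for k
  define \<psi> where "\<psi> = foldr Conj (map (map_qf id id idx) ps) (Eq (Var n) (Var n))"
  have "(Suc n, \<psi>) \<in> Th_ex Fs ar Cs C"
    unfolding Th_ex_def
  proof (simp, intro conjI exI[of _ v])
    show "wf_qf Fs ar Cs (Suc n) \<psi>" unfolding \<psi>_def wf_foldr
      using ps idx fin wf_lits[of _ ar LF LC X Fs Cs idx "Suc n"] by (auto simp: diag_def less_Suc_eq)
    show "\<forall>i<Suc n. v i \<in> alg_univ C" using c0 fin xs by (auto simp: v_def n_def)
    show "sat C v \<psi>" unfolding \<psi>_def sat_foldr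
    proof (simp add: sat_map ps, intro ballI)
      fix p assume p: "p \<in> diag ar C LF LC X"
      then have "set3_qf p \<subseteq> X" "sat C id p" using lits_vars[of p ar LF LC X] by (auto simp: diag_def)
      moreover have "\<forall>x\<in>set3_qf p. (v \<circ> idx) x = id x" using idx calculation(1) by (auto simp: v_def)
      ultimately show "sat C (v \<circ> idx) p" using sat_cong[of p "v \<circ> idx" id C] by simp
    qed
  qed
  then have "(Suc n, \<psi>) \<in> Th_ex Fs ar Cs B" using Th by auto
  then obtain w where w: "\<forall>i<Suc n. w i \<in> alg_univ B" "sat B w \<psi>" unfolding Th_ex_def by auto
  show ?thesis
  proof (intro exI[of _ "w \<circ> idx"] conjI ballI)
    show "(w \<circ> idx) ` X \<subseteq> alg_univ B" using w(1) idx less_SucI by fastforce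
    fix p assume "p \<in> diag ar C LF LC X"
    then show "sat B (w \<circ> idx) p" using w(2) ps unfolding \<psi>_def sat_foldr by (auto simp: sat_map)
  qed
qed

lemma ldom_D: "ldom (Dsys Fs ar Cs C) = {(x,i). i \<in> Idx Fs Cs C \<and> x \<in> snd (snd i)}"
  by (simp add: ldom_def)

lemma lrel_D: "lrel (Dsys Fs ar Cs C) = {(p,q). p \<in> ldom (Dsys Fs ar Cs C) \<and> q \<in> ldom (Dsys Fs ar Cs C) \<and> fst p = fst q}"
proof -
  have "\<exists>k\<in>Idx Fs Cs C. ile i k \<and> ile j k" if "i \<in> Idx Fs Cs C" "j \<in> Idx Fs Cs C" for i j
    using that
    by (intro bexI[of _ "(fst i \<union> fst j, fst (snd i) \<union> fst (snd j), snd (snd i) \<union> snd (snd j))"])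
       (auto simp: Idx_def ile_def)
  then show ?thesis unfolding lrel_def ldom_D by auto
qed

definition HH :: "'f set \<Rightarrow> ('f \<Rightarrow> nat) \<Rightarrow> 'c set \<Rightarrow> ('f,'c,'a) alg \<Rightarrow> 'a \<Rightarrow> ('a \<times> ('f set \<times> 'c set \<times> 'a set)) set" where
  "HH Fs ar Cs C x = {q \<in> ldom (Dsys Fs ar Cs C). fst q = x}"

lemma class_D: "p \<in> ldom (Dsys Fs ar Cs C) \<Longrightarrow> lrel (Dsys Fs ar Cs C) `` {p} = HH Fs ar Cs C (fst p)"
  unfolding lrel_D HH_def by auto

lemma i0: "x \<in> alg_univ C \<Longrightarrow> (x, ({}, {}, {x})) \<in> ldom (Dsys Fs ar Cs C)"
  by (auto simp: ldom_D Idx_def)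

lemma HH_inj: "inj_on (HH Fs ar Cs C) (alg_univ C)"
proof (rule inj_onI)
  fix x y assume x: "x \<in> alg_univ C" and "y \<in> alg_univ C" and e: "HH Fs ar Cs C x = HH Fs ar Cs C y"
  have "(x, ({}, {}, {x})) \<in> HH Fs ar Cs C x" using i0[OF x] by (simp add: HH_def)
  then have "(x, ({}, {}, {x})) \<in> HH Fs ar Cs C y" using e by simp
  then show "x = y" by (simp add: HH_def)
qed

lemma univ_D: "ldom (Dsys Fs ar Cs C) // lrel (Dsys Fs ar Cs C) = HH Fs ar Cs C ` alg_univ C"
proof
  show "ldom (Dsys Fs ar Cs C) // lrel (Dsys Fs ar Cs C) \<subseteq> HH Fs ar Cs C ` alg_univ C"
  proof
    fix A assume "A \<in> ldom (Dsys Fs ar Cs C) // lrel (Dsys Fs ar Cs C)"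
    then obtain p where p: "p \<in> ldom (Dsys Fs ar Cs C)" "A = lrel (Dsys Fs ar Cs C) `` {p}"
      unfolding quotient_def by blast
    obtain x i where pi: "p = (x, i)" by (cases p)
    have "x \<in> alg_univ C" using p(1) unfolding pi ldom_D Idx_def by auto
    moreover have "A = HH Fs ar Cs C x" using class_D[OF p(1)] p(2) pi by simp
    ultimately show "A \<in> HH Fs ar Cs C ` alg_univ C" by blast
  qed
  show "HH Fs ar Cs C ` alg_univ C \<subseteq> ldom (Dsys Fs ar Cs C) // lrel (Dsys Fs ar Cs C)"
  proof
    fix A assume "A \<in> HH Fs ar Cs C ` alg_univ C"
    then obtain x where x: "x \<in> alg_univ C" "A = HH Fs ar Cs C x" by auto
    have "A = lrel (Dsys Fs ar Cs C) `` {(x, ({}, {}, {x}))}" using class_D[OF i0[OF x(1)]] x(2) by simp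
    then show "A \<in> ldom (Dsys Fs ar Cs C) // lrel (Dsys Fs ar Cs C)"
      using i0[OF x(1)] by (simp add: quotientI)
  qed
qed

lemma eq_lits_var: "Eq s (Var x0) \<in> lits ar LF LC X \<Longrightarrow> x0 \<in> X"
  using lits_vars[of "Eq s (Var x0)" ar LF LC X] by auto

lemma eq_lits_var2: "Eq (Var x0) s \<in> lits ar LF LC X \<Longrightarrow> x0 \<in> X"
  using lits_vars[of "Eq (Var x0) s" ar LF LC X] by auto

lemma evt_mapVar: "map (evt C id) (map Var xs) = xs"
  by (induction xs) auto

lemma evt_mapVar2: "map (evt C id \<circ> Var) xs = xs"
  by (induction xs) auto

lemma op_D:
  fixes C :: "('f,'c,'a) alg"
  assumes C: "is_alg Fs ar Cs C" and F: "F \<in> Fs" and xs: "set xs \<subseteq> alg_univ C" "length xs = ar F"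
  shows "alg_op (limit_alg ar (Dsys Fs ar Cs C)) F (map (HH Fs ar Cs C) xs) = HH Fs ar Cs C (alg_op C F xs)"
proof -
  let ?D = "Dsys Fs ar Cs C" and ?H = "HH Fs ar Cs C"
  define P where "P q \<longleftrightarrow> (\<exists>i ys. i \<in> dI ?D \<and> snd q \<in> dI ?D \<and> dle ?D i (snd q) \<and>
                     set ys \<subseteq> dX ?D i \<and> length ys = ar F \<and>
                     map (\<lambda>y. lrel ?D `` {(y, i)}) ys = map ?H xs \<and>
                     Eq (App F (map (\<lambda>y. Var (dgam ?D i (snd q) y)) ys)) (Var (fst q)) \<in> dphi ?D (snd q))" for q
  have opc: "alg_op C F xs \<in> alg_univ C" using C F xs unfolding is_alg_def by auto
  define j where "j = ({F}, {}::'c set, insert (alg_op C F xs) (set xs))"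
  have j: "j \<in> Idx Fs Cs C" using F xs opc by (auto simp: j_def Idx_def)
  have "P (alg_op C F xs, j)" unfolding P_def
  proof (intro exI[of _ j] exI[of _ xs] conjI)
    show "map (\<lambda>y. lrel ?D `` {(y, j)}) xs = map ?H xs"
    proof (rule map_cong[OF refl])
      fix y assume "y \<in> set xs"
      then have "(y, j) \<in> ldom ?D" using j by (auto simp: ldom_D j_def)
      then show "lrel ?D `` {(y, j)} = ?H y" using class_D by fastforce
    qed
    show "Eq (App F (map (\<lambda>y. Var (dgam ?D j (snd (alg_op C F xs, j)) y)) xs)) (Var (fst (alg_op C F xs, j))) \<in> dphi ?D (snd (alg_op C F xs, j))"
      using xs by (auto simp: diag_def lits_def j_def evt_mapVar2)
  qed (use j xs in \<open>auto simp: ile_def j_def\<close>)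
  then have ex: "\<exists>q. P q" by blast
  have res: "lrel ?D `` {q} = ?H (alg_op C F xs)" if "P q" for q
  proof -
    obtain i ys where i: "i \<in> Idx Fs Cs C" "snd q \<in> Idx Fs Cs C" "set ys \<subseteq> snd (snd i)" "length ys = ar F"
      "map (\<lambda>y. lrel ?D `` {(y, i)}) ys = map ?H xs"
      "Eq (App F (map Var ys)) (Var (fst q)) \<in> diag ar C (fst (snd q)) (fst (snd (snd q))) (snd (snd (snd q)))"
      using \<open>P q\<close> unfolding P_def by auto
    have "map (\<lambda>y. lrel ?D `` {(y, i)}) ys = map ?H ys"
    proof (rule map_cong[OF refl])
      fix y assume "y \<in> set ys"
      then have "(y, i) \<in> ldom ?D" using i by (auto simp: ldom_D)
      then show "lrel ?D `` {(y, i)} = ?H y" using class_D by fastforce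
    qed
    then have "map ?H ys = map ?H xs" using i(5) by simp
    moreover have "set ys \<subseteq> alg_univ C" using i(1,3) unfolding Idx_def by fastforce
    ultimately have "ys = xs" using HH_inj[of Fs ar Cs C] xs(1)
      by (metis inj_on_map_eq_map inj_on_subset le_sup_iff)
    then have e: "alg_op C F xs = fst q" and l: "Eq (App F (map Var ys)) (Var (fst q)) \<in> lits ar (fst (snd q)) (fst (snd (snd q))) (snd (snd (snd q)))"
      using i(6) by (auto simp: diag_def evt_mapVar2)
    have "q \<in> ldom ?D" using eq_lits_var[OF l] i(2) by (cases q) (auto simp: ldom_D)
    then show ?thesis using class_D e by fastforce
  qed
  have "alg_op (limit_alg ar ?D) F (map ?H xs) = lrel ?D `` {SOME q. P q}"
    unfolding limit_alg_def P_def by simp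
  also have "\<dots> = ?H (alg_op C F xs)" using res someI_ex[OF ex] by blast
  finally show ?thesis .
qed

lemma cst_D:
  assumes C: "is_alg Fs ar Cs C" and c: "c \<in> Cs"
  shows "alg_cst (limit_alg ar (Dsys Fs ar Cs C)) c = HH Fs ar Cs C (alg_cst C c)"
proof -
  let ?D = "Dsys Fs ar Cs C" and ?H = "HH Fs ar Cs C"
  define P where "P p \<longleftrightarrow> p \<in> ldom ?D \<and> Eq (Var (fst p)) (Cst c) \<in> dphi ?D (snd p)" for p
  have cc: "alg_cst C c \<in> alg_univ C" using C c unfolding is_alg_def by auto
  have "P (alg_cst C c, ({}, {c}, {alg_cst C c}))" unfolding P_def
    using c cc by (auto simp: ldom_D Idx_def diag_def lits_def)
  then have ex: "\<exists>p. P p" by blast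
  have res: "lrel ?D `` {p} = ?H (alg_cst C c)" if "P p" for p
  proof -
    have "fst p = alg_cst C c" using that by (auto simp: P_def diag_def)
    then show ?thesis using that class_D unfolding P_def by fastforce
  qed
  have "alg_cst (limit_alg ar ?D) c = lrel ?D `` {SOME p. P p}"
    unfolding limit_alg_def P_def by simp
  also have "\<dots> = ?H (alg_cst C c)" using res someI_ex[OF ex] by blast
  finally show ?thesis .
qed

theorem mainTheorem13:
  fixes Fs :: "'f set" and ar :: "'f \<Rightarrow> nat" and Cs :: "'c set"
    and B :: "('f, 'c, 'b) alg" and C :: "('f, 'c, 'a) alg"
  assumes "is_alg Fs ar Cs B" and "is_alg Fs ar Cs C"
    and "Th_ex Fs ar Cs C \<subseteq> Th_ex Fs ar Cs B"
  shows "\<exists>D :: ('f set \<times> 'c set \<times> 'a set, 'f, 'c, 'a) dsys.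
           limit_over Fs ar Cs B D \<and> (\<exists>h. alg_iso Fs ar Cs C (limit_alg ar D) h)"
proof (intro exI[of _ "Dsys Fs ar Cs C"] conjI exI[of _ "HH Fs ar Cs C"])
  show "limit_over Fs ar Cs B (Dsys Fs ar Cs C)"
    unfolding limit_over_def using direct[OF assms(2)] over[OF assms(2,3)] by auto
  show "alg_iso Fs ar Cs C (limit_alg ar (Dsys Fs ar Cs C)) (HH Fs ar Cs C)"
    unfolding alg_iso_def
  proof (intro conjI ballI allI impI)
    show "bij_betw (HH Fs ar Cs C) (alg_univ C) (alg_univ (limit_alg ar (Dsys Fs ar Cs C)))"
      unfolding bij_betw_def using HH_inj[of Fs ar Cs C] univ_D[of Fs ar Cs C] by (simp add: limit_alg_def)
  qed (use op_D[OF assms(2)] cst_D[OF assms(2)] in auto)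
qed


end
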